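(* Fix $p\ge 1$, $\beta^*\in\mathbb{R}^p$ with support $S^*=\{j:\beta^*_j\neq 0\}$, and $\sigma^2>0$. Then $\mathsf{R}_{\mathtt{oos}}(\beta^*;\mathcal{U}_{\beta^*,\sigma^2})=\sigma^2$, and for every $\beta\in\mathbb{R}^p$, $$\sigma^2\|\beta-\beta^*\|_2^2\;\le\;\mathsf{R}_{\mathtt{oos}}(\beta;\mathcal{U}_{\beta^*,\sigma^2})-\mathsf{R}_{\mathtt{oos}}(\beta^*;\mathcal{U}_{\beta^*,\sigma^2})\;\le\;\sigma^2p^2\|\beta-\beta^*\|_2^2+2\sigma^2p\,\|\beta_{[p]\setminus S^*}\|_2 .$$
   Context: For $S\subseteq[p]$ and $x\in\mathbb{R}^p$, $x_S$ is the subvector of coordinates in $S$. $\mathcal{U}_{\beta^*,\sigma^2}$ is the set of probability distributions $\mu$ of $(x,y)\in\mathbb{R}^p\times\mathbb{R}$ such that $\mathbb{E}_\mu[y\mid x_{S^*}]=(\beta^*_{S^*})^\top x_{S^*}$ and $\mathrm{Var}_\mu[y\mid x_{S^*}]\le\sigma^2$ for $\mu$-a.e. $x$, and $\mathbb{E}_\mu[x_j^2]\le\sigma^2$ for all $j\in[p]$. The out-of-sample risk is $\mathsf{R}_{\mathtt{oos}}(\beta;\mathcal{U}_{\beta^*,\sigma^2})=\sup_{\mu\in\mathcal{U}_{\beta^*,\sigma^2}}\mathbb{E}_{(x,y)\sim\mu}[|y-\beta^\top x|^2]$. *)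

theory Defs
  imports "HOL-Probability.Probability"
begin

definition supp :: "real^'p::finite \<Rightarrow> 'p set" where
  "supp b = {j. b $ j \<noteq> 0}"

(* x_S, realised as the vector agreeing with x on S and 0 off S *)
definition proj :: "'p::finite set \<Rightarrow> real^'p \<Rightarrow> real^'p" where
  "proj S x = (\<chi> j. if j \<in> S then x $ j else 0)"

definition sigma_xS :: "'p::finite set \<Rightarrow> ((real^'p) \<times> real) measure \<Rightarrow> ((real^'p) \<times> real) measure" where
  "sigma_xS S M = vimage_algebra (space M) (\<lambda>z. proj S (fst z)) borel"

definition U_set :: "real^'p::finite \<Rightarrow> real \<Rightarrow> ((real^'p) \<times> real) measure set" where
  "U_set bstar s2 = {M. prob_space M \<and> sets M = sets borel \<and>
     integrable M snd \<and>
     (AE z in M. real_cond_exp M (sigma_xS (supp bstar) M) snd z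
                   = proj (supp bstar) bstar \<bullet> proj (supp bstar) (fst z)) \<and>
     (AE z in M. nn_cond_exp M (sigma_xS (supp bstar) M)
                   (\<lambda>z. ennreal ((snd z - proj (supp bstar) bstar \<bullet> proj (supp bstar) (fst z))\<^sup>2)) z
                 \<le> ennreal s2) \<and>
     (\<forall>j. (\<integral>\<^sup>+ z. ennreal ((fst z $ j)\<^sup>2) \<partial>M) \<le> ennreal s2)}"

definition R_oos :: "real^'p::finite \<Rightarrow> ((real^'p) \<times> real) measure set \<Rightarrow> ennreal" where
  "R_oos b U = (SUP M\<in>U. \<integral>\<^sup>+ z. ennreal ((snd z - b \<bullet> fst z)\<^sup>2) \<partial>M)"

end

theory Submission
  imports Defs
begin


lemma linear_proj: "linear (proj S)"
  by (rule linearI) (auto simp: proj_def vec_eq_iff)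

lemma cont_proj: "continuous_on A (proj S)"
  using linear_proj linear_continuous_on linear_conv_bounded_linear by blast

lemma meas_cont: "sets M = sets borel \<Longrightarrow> continuous_on UNIV f \<Longrightarrow> f \<in> borel_measurable M"
  using measurable_cong_sets[of M borel borel borel] borel_measurable_continuous_onI by blast

lemma proj_supp_self: "proj (supp b) b = b"
  by (auto simp: proj_def supp_def vec_eq_iff)

lemma inner_proj: "proj S a \<bullet> x = a \<bullet> proj S x"
  by (simp add: proj_def inner_vec_def, intro sum.cong) auto

lemma inner_split: "b \<bullet> x = b \<bullet> proj S x + proj (-S) b \<bullet> x"
proof -
  have "b \<bullet> x = (\<Sum>j\<in>UNIV. b$j * x$j)" by (simp add: inner_vec_def)
  also have "\<dots> = (\<Sum>j\<in>UNIV. b$j * (if j \<in> S then x$j else 0) + (if j \<in> S then 0 else b$j) * x$j)"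
    by (intro sum.cong) auto
  also have "\<dots> = b \<bullet> proj S x + proj (-S) b \<bullet> x"
    by (simp add: inner_vec_def proj_def sum.distrib, intro sum.cong) auto
  finally show ?thesis .
qed

lemma bstar_projc: "bstar \<bullet> proj (- supp bstar) x = 0"
  by (auto simp: inner_vec_def proj_def supp_def intro!: sum.neutral)

lemma norm_proj_le: "norm (proj S x) \<le> norm x"
proof -
  have "norm (proj S x)^2 \<le> norm x ^2"
    unfolding power2_norm_eq_inner by (auto simp: inner_vec_def proj_def intro!: sum_mono)
  then show ?thesis using power2_le_imp_le by auto
qed

lemma norm_sq_sum: "norm (x::real^'p)^2 = (\<Sum>j\<in>UNIV. (x$j)^2)"
  unfolding power2_norm_eq_inner by (simp add: inner_vec_def power2_eq_square)

lemma cont_proj2[continuous_intros]: "continuous_on A f \<Longrightarrow> continuous_on A (\<lambda>x. proj S (f x))"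
  using linear_proj linear_conv_bounded_linear bounded_linear.continuous_on by blast

lemma int_bound_helper:
  fixes f :: "'a \<Rightarrow> real"
  assumes [measurable]: "f \<in> borel_measurable M" and "\<And>z. 0 \<le> f z"
    and le: "(\<integral>\<^sup>+ z. ennreal (f z) \<partial>M) \<le> ennreal c" and "0 \<le> c"
  shows "integrable M f \<and> integral\<^sup>L M f \<le> c"
proof -
  have i: "integrable M f"
    by (rule integrableI_bounded) (use assms le in \<open>auto simp: top_unique intro: le_less_trans\<close>)
  have "ennreal (integral\<^sup>L M f) = (\<integral>\<^sup>+ z. ennreal (f z) \<partial>M)"
    using nn_integral_eq_integral[OF i] assms by simp
  with le have "ennreal (integral\<^sup>L M f) \<le> ennreal c" by simp
  with assms show ?thesis using i by (simp add: ennreal_le_iff)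
qed

lemma key_ineq:
  fixes A u w c n D :: real
  assumes "\<bar>w\<bar> \<le> c*n" "0 \<le> c" "0 \<le> n" "(u+w)^2 \<le> D"
  shows "(A+(u+w))^2 \<le> A^2 + 2*(A*u) + c*(A^2+n^2) + D"
proof -
  have "A*w \<le> \<bar>A\<bar>*\<bar>w\<bar>" by (metis abs_ge_self abs_mult)
  then have "2*A*w \<le> 2*\<bar>A\<bar>*\<bar>w\<bar>" by simp
  also have "\<dots> \<le> 2*\<bar>A\<bar>*(c*n)" using assms by (simp add: mult_left_mono)
  also have "\<dots> \<le> c*(A^2+n^2)"
  proof -
    have "0 \<le> c*(\<bar>A\<bar>-n)^2" using assms by simp
    moreover have "A^2 = \<bar>A\<bar>*\<bar>A\<bar>" by (simp add: power2_eq_square)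
    ultimately show ?thesis by (simp add: power2_eq_square algebra_simps)
  qed
  finally have "2*A*w \<le> c*(A^2+n^2)" .
  then show ?thesis using assms(4) by (simp add: power2_eq_square algebra_simps)
qed

lemma abs_prod_le: "\<bar>(a::real)*b\<bar> \<le> a^2 + b^2"
proof -
  have "0 \<le> (\<bar>a\<bar>-\<bar>b\<bar>)^2" by simp
  moreover have "a^2 = \<bar>a\<bar>*\<bar>a\<bar>" "b^2 = \<bar>b\<bar>*\<bar>b\<bar>" by (simp_all add: power2_eq_square)
  ultimately have h: "2*(\<bar>a\<bar>*\<bar>b\<bar>) \<le> a^2+b^2" by (simp add: power2_eq_square algebra_simps)
  have "0 \<le> \<bar>a\<bar>*\<bar>b\<bar>" by simp
  with h have "\<bar>a\<bar>*\<bar>b\<bar> \<le> a^2+b^2" by linarith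
  then show ?thesis by (simp add: abs_mult)
qed

lemma upper_bound:
  fixes bstar b :: "real^'p" and s2 :: real
  assumes s2: "s2 > 0" and MU: "M \<in> U_set bstar s2"
  shows "(\<integral>\<^sup>+ z. ennreal ((snd z - b \<bullet> fst z)\<^sup>2) \<partial>M) \<le>
    ennreal (s2 + (s2 * (real CARD('p))\<^sup>2 * (norm (b - bstar))\<^sup>2
                  + 2 * s2 * real CARD('p) * norm (proj (- supp bstar) b)))"
proof -
  define S where "S = supp bstar"
  define F where "F = sigma_xS S M"
  from MU have P: "prob_space M" and sM: "sets M = sets borel" and intsnd: "integrable M snd"
    and ce: "AE z in M. real_cond_exp M F snd z = proj S bstar \<bullet> proj S (fst z)"
    and nce: "AE z in M. nn_cond_exp M F
                   (\<lambda>z. ennreal ((snd z - proj S bstar \<bullet> proj S (fst z))\<^sup>2)) z \<le> ennreal s2"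
    and mom: "\<And>j. (\<integral>\<^sup>+ z. ennreal ((fst z $ j)\<^sup>2) \<partial>M) \<le> ennreal s2"
    unfolding U_set_def S_def F_def by auto
  interpret prob_space M by (rule P)
  have spM: "space M = UNIV" using sets_eq_imp_space_eq[OF sM] by simp
  have mc: "\<And>f. continuous_on UNIV f \<Longrightarrow> f \<in> borel_measurable M" using meas_cont[OF sM] by blast
  have gM: "(\<lambda>z. proj S (fst z)) \<in> borel_measurable M" by (rule mc) (intro continuous_intros)
  have subalg: "subalgebra M F"
    unfolding subalgebra_def F_def sigma_xS_def
    using sets_image_in_sets[OF refl gM] by simp
  interpret finite_measure_subalgebra M F by unfold_locales (rule subalg)
  have gF: "(\<lambda>z. proj S (fst z)) \<in> borel_measurable F"
    unfolding F_def sigma_xS_def by (rule measurable_vimage_algebra1) simp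
  define e where "e z = snd z - proj S bstar \<bullet> proj S (fst z)" for z :: "(real^'p) \<times> real"
  define d where "d = bstar - b"
  define u where "u z = d \<bullet> proj S (fst z)" for z :: "(real^'p) \<times> real"
  define v where "v z = proj S bstar \<bullet> proj S (fst z)" for z :: "(real^'p) \<times> real"
  define N where "N z = (norm (fst z))^2" for z :: "(real^'p) \<times> real"
  define c where "c = norm (proj (- S) b)"
  define p where "p = real CARD('p)"
  have [measurable]: "e \<in> borel_measurable M" unfolding e_def by (rule mc) (intro continuous_intros)
  have [measurable]: "u \<in> borel_measurable M" unfolding u_def by (rule mc) (intro continuous_intros)
  have [measurable]: "v \<in> borel_measurable M" unfolding v_def by (rule mc) (intro continuous_intros)
  have [measurable]: "N \<in> borel_measurable M" unfolding N_def by (rule mc) (intro continuous_intros)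
  have [measurable]: "(\<lambda>z. fst z $ j) \<in> borel_measurable M" for j by (rule mc) (intro continuous_intros)
  have uF: "u \<in> borel_measurable F"
  proof -
    have "(\<lambda>w. d \<bullet> w) \<in> borel_measurable borel" by (intro borel_measurable_continuous_onI continuous_intros)
    from measurable_comp[OF gF this] show ?thesis unfolding u_def o_def .
  qed
  have "(\<integral>\<^sup>+ z. ennreal ((e z)\<^sup>2) \<partial>M) = (\<integral>\<^sup>+ z. 1 * nn_cond_exp M F (\<lambda>z. ennreal ((e z)\<^sup>2)) z \<partial>M)"
    by (subst nn_cond_exp_intg) auto
  also have "\<dots> \<le> (\<integral>\<^sup>+ z. ennreal s2 \<partial>M)"
    using nce unfolding e_def by (intro nn_integral_mono_AE) auto
  also have "\<dots> = ennreal s2" by (simp add: emeasure_space_1)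
  finally have E2: "integrable M (\<lambda>z. (e z)\<^sup>2) \<and> (\<integral>z. (e z)\<^sup>2 \<partial>M) \<le> s2"
    using s2 by (intro int_bound_helper) auto
  have Xj: "integrable M (\<lambda>z. (fst z $ j)\<^sup>2) \<and> (\<integral>z. (fst z $ j)\<^sup>2 \<partial>M) \<le> s2" for j
    using s2 mom[of j] by (intro int_bound_helper) auto
  have Nsum: "N z = (\<Sum>j\<in>UNIV. (fst z $ j)\<^sup>2)" for z unfolding N_def by (rule norm_sq_sum)
  have intN: "integrable M N" unfolding Nsum using Xj by auto
  have "(\<integral>z. N z \<partial>M) = (\<Sum>j\<in>UNIV. (\<integral>z. (fst z $ j)\<^sup>2 \<partial>M))"
    unfolding Nsum using Bochner_Integration.integral_sum[where I=UNIV and M=M and f="\<lambda>j z. (fst z $ j)\<^sup>2"] Xj by simp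
  also have "\<dots> \<le> (\<Sum>j\<in>(UNIV::'p set). s2)" using Xj by (intro sum_mono) auto
  finally have EN: "(\<integral>z. N z \<partial>M) \<le> p * s2" unfolding p_def by simp
  have snd_eq: "snd z = e z + v z" for z by (simp add: e_def v_def)
  have xN: "norm (proj S (fst z)) ^2 \<le> N z" for z
    unfolding N_def using norm_proj_le by (simp add: power_mono)
  have sqb: "(a \<bullet> proj S (fst z))^2 \<le> (norm a)^2 * N z" for a z
  proof -
    have "\<bar>a \<bullet> proj S (fst z)\<bar> \<le> norm a * norm (proj S (fst z))" by (rule Cauchy_Schwarz_ineq2)
    then have "\<bar>a \<bullet> proj S (fst z)\<bar>^2 \<le> (norm a * norm (proj S (fst z)))^2" using power_mono abs_ge_zero by blast
    also have "\<dots> = (norm a)^2 * norm (proj S (fst z))^2" by (simp add: power_mult_distrib)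
    also have "\<dots> \<le> (norm a)^2 * N z" using xN by (simp add: mult_left_mono)
    finally show ?thesis by simp
  qed
  have ub: "(u z)^2 \<le> (norm d)^2 * N z" for z unfolding u_def by (rule sqb)
  have vb: "(v z)^2 \<le> (norm (proj S bstar))^2 * N z" for z unfolding v_def by (rule sqb)
  have int_ue: "integrable M (\<lambda>z. u z * e z)"
  proof (rule Bochner_Integration.integrable_bound)
    show "integrable M (\<lambda>z. (norm d)^2 * N z + (e z)^2)" using intN E2 by auto
    show "AE z in M. norm (u z * e z) \<le> norm ((norm d)^2 * N z + (e z)^2)"
    proof (intro AE_I2)
      fix z have "\<bar>u z * e z\<bar> \<le> (u z)^2 + (e z)^2" by (rule abs_prod_le)
      also have "\<dots> \<le> (norm d)^2 * N z + (e z)^2" using ub[of z] by simp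
      finally show "norm (u z * e z) \<le> norm ((norm d)^2 * N z + (e z)^2)" by simp
    qed
  qed measurable
  have int_uv: "integrable M (\<lambda>z. u z * v z)"
  proof (rule Bochner_Integration.integrable_bound)
    show "integrable M (\<lambda>z. (norm d)^2 * N z + (norm (proj S bstar))^2 * N z)" using intN by auto
    show "AE z in M. norm (u z * v z) \<le> norm ((norm d)^2 * N z + (norm (proj S bstar))^2 * N z)"
    proof (intro AE_I2)
      fix z have "\<bar>u z * v z\<bar> \<le> (u z)^2 + (v z)^2" by (rule abs_prod_le)
      also have "\<dots> \<le> (norm d)^2 * N z + (norm (proj S bstar))^2 * N z" using ub[of z] vb[of z] by simp
      finally show "norm (u z * v z) \<le> norm ((norm d)^2 * N z + (norm (proj S bstar))^2 * N z)"
        by (simp add: N_def)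
    qed
  qed measurable
  have int_us: "integrable M (\<lambda>z. u z * snd z)"
    using Bochner_Integration.integrable_add[OF int_ue int_uv] by (simp add: snd_eq distrib_left)
  have [measurable]: "snd \<in> borel_measurable M" by (rule mc) (intro continuous_intros)
  have "(\<integral>z. u z * snd z \<partial>M) = (\<integral>z. u z * real_cond_exp M F snd z \<partial>M)"
    using real_cond_exp_intg(2)[OF int_us uF] by simp
  also have "\<dots> = (\<integral>z. u z * v z \<partial>M)"
  proof -
    have m1: "(\<lambda>z. u z * real_cond_exp M F snd z) \<in> borel_measurable M"
      using borel_measurable_cond_exp2[of M F snd] by measurable
    have m2: "(\<lambda>z. u z * v z) \<in> borel_measurable M" by measurable
    show ?thesis using ce by (intro integral_cong_AE[OF m1 m2]) (auto simp: v_def)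
  qed
  finally have cross: "(\<integral>z. u z * e z \<partial>M) = 0"
  proof -
    assume h: "(\<integral>z. u z * snd z \<partial>M) = (\<integral>z. u z * v z \<partial>M)"
    have "(\<integral>z. u z * e z \<partial>M) = (\<integral>z. u z * snd z - u z * v z \<partial>M)"
      by (simp add: snd_eq algebra_simps)
    also have "\<dots> = 0" using h int_us int_uv by simp
    finally show ?thesis .
  qed
  define f where "f z = (e z)^2 + 2*(e z * u z) + c*((e z)^2 + N z) + (norm d)^2 * N z" for z
  have pt: "(snd z - b \<bullet> fst z)^2 \<le> f z" for z
  proof -
    define w where "w = - (proj (-S) b \<bullet> fst z)"
    have Pb: "proj S bstar = bstar" unfolding S_def by (rule proj_supp_self)
    have "snd z - b \<bullet> fst z = e z + (u z + w)"
      using inner_split[of b "fst z" S]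
      by (simp add: e_def u_def w_def d_def Pb inner_diff_left)
    moreover have "\<bar>w\<bar> \<le> c * norm (fst z)"
      unfolding w_def c_def using Cauchy_Schwarz_ineq2 by simp
    moreover have "(u z + w)^2 \<le> (norm d)^2 * N z"
    proof -
      have Qd: "proj (-S) d = proj (-S) bstar - proj (-S) b"
        unfolding d_def by (rule linear_diff[OF linear_proj])
      have "proj (-S) bstar \<bullet> fst z = 0"
        unfolding inner_proj S_def by (rule bstar_projc)
      then have "u z + w = d \<bullet> fst z"
        using inner_split[of d "fst z" S] by (simp add: u_def w_def Qd inner_diff_left)
      moreover have "\<bar>d \<bullet> fst z\<bar> \<le> norm d * norm (fst z)" by (rule Cauchy_Schwarz_ineq2)
      then have "\<bar>d \<bullet> fst z\<bar>^2 \<le> (norm d * norm (fst z))^2" using power_mono abs_ge_zero by blast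
      ultimately show ?thesis by (simp add: N_def power_mult_distrib)
    qed
    ultimately have "(snd z - b \<bullet> fst z)^2 \<le> (e z)^2 + 2*(e z * u z) + c*((e z)^2 + (norm (fst z))^2) + (norm d)^2 * N z"
      using key_ineq[of w c "norm (fst z)" "u z" "(norm d)^2 * N z" "e z"] by (simp add: c_def)
    then show ?thesis by (simp add: f_def N_def)
  qed
  have f_nn: "0 \<le> f z" for z using pt[of z] by (meson order_trans zero_le_power2)
  have int_f: "integrable M f" unfolding f_def using E2 int_ue intN by (auto simp: mult.commute)
  have If: "(\<integral>z. f z \<partial>M) = (\<integral>z. (e z)^2 \<partial>M) + 2 * 0 + c * ((\<integral>z. (e z)^2 \<partial>M) + (\<integral>z. N z \<partial>M)) + (norm d)^2 * (\<integral>z. N z \<partial>M)"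
    unfolding f_def using E2 int_ue intN cross
    by (simp add: Bochner_Integration.integral_add Bochner_Integration.integrable_add mult.commute)
  have c0: "0 \<le> c" unfolding c_def by simp
  have p1: "1 \<le> p" unfolding p_def by (simp add: Suc_leI)
  have "(\<integral>z. f z \<partial>M) \<le> s2 + c * (s2 + p * s2) + (norm d)^2 * (p * s2)"
    unfolding If using E2 EN c0 by (intro add_mono mult_left_mono) auto
  also have "\<dots> \<le> s2 + (s2 * p^2 * (norm (b - bstar))^2 + 2 * s2 * p * c)"
  proof -
    have "c * s2 \<le> c * (p * s2)" using c0 p1 s2 by (intro mult_left_mono) auto
    moreover have "(norm d)^2 * (p * s2) \<le> (norm d)^2 * (p*p * s2)" using p1 s2
      by (intro mult_left_mono) (auto simp: mult_le_cancel_right1)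
    moreover have "norm d = norm (b - bstar)" unfolding d_def by (rule norm_minus_commute)
    ultimately show ?thesis by (simp add: algebra_simps power2_eq_square)
  qed
  finally have fin: "(\<integral>z. f z \<partial>M) \<le> s2 + (s2 * p^2 * (norm (b - bstar))^2 + 2 * s2 * p * c)" .
  have [measurable]: "f \<in> borel_measurable M" unfolding f_def by measurable
  have "(\<integral>\<^sup>+ z. ennreal ((snd z - b \<bullet> fst z)\<^sup>2) \<partial>M) \<le> (\<integral>\<^sup>+ z. ennreal (f z) \<partial>M)"
    using pt by (intro nn_integral_mono ennreal_leI) simp
  also have "\<dots> = ennreal (\<integral>z. f z \<partial>M)"
    using nn_integral_eq_integral[OF int_f] f_nn by simp
  also have "\<dots> \<le> ennreal (s2 + (s2 * p^2 * (norm (b - bstar))^2 + 2 * s2 * p * c))"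
    using fin by (rule ennreal_leI)
  finally show ?thesis unfolding p_def c_def S_def .
qed


definition Mv :: "real^'p \<Rightarrow> real \<Rightarrow> real \<Rightarrow> ((real^'p) \<times> real) measure" where
  "Mv v c0 s = distr (measure_pmf (pmf_of_set (UNIV::bool set))) borel (\<lambda>t. (v, c0 + (if t then s else - s)))"

lemma Mv_basic:
  shows "prob_space (Mv v c0 s)" "sets (Mv v c0 s) = sets borel"
proof -
  show "prob_space (Mv v c0 s)" unfolding Mv_def
    apply (rule prob_space.prob_space_distr)
    apply (rule measure_pmf.prob_space_axioms)
    apply (simp only: measurable_pmf_measure1)
    by auto
  show "sets (Mv v c0 s) = sets borel" unfolding Mv_def by simp
qed

lemma Mv_integral:
  fixes g :: "(real^'p) \<times> real \<Rightarrow> real"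
  assumes [measurable]: "g \<in> borel_measurable borel"
  shows "integrable (Mv v c0 s) g"
    "(\<integral>z. g z \<partial>Mv v c0 s) = (g (v, c0 + s) + g (v, c0 - s)) / 2"
proof -
  let ?f = "\<lambda>t::bool. (v, c0 + (if t then s else - s))"
  have fm: "?f \<in> measurable (measure_pmf (pmf_of_set (UNIV::bool set))) borel" 
    by (simp only: measurable_pmf_measure1) auto
  show "integrable (Mv v c0 s) g" unfolding Mv_def
    apply (subst integrable_distr_eq[OF fm])
     apply (rule assms)
    by (rule integrable_measure_pmf_finite) simp
  have "(\<integral>z. g z \<partial>Mv v c0 s) = (\<integral>t. g (?f t) \<partial>measure_pmf (pmf_of_set (UNIV::bool set)))"
    unfolding Mv_def by (rule integral_distr[OF fm assms])
  also have "\<dots> = (\<Sum>t\<in>UNIV. g (?f t) * pmf (pmf_of_set (UNIV::bool set)) t)"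
    by (rule integral_measure_pmf_real) auto
  also have "\<dots> = (g (v, c0 + s) + g (v, c0 - s)) / 2"
    by (simp add: UNIV_bool)
  finally show "(\<integral>z. g z \<partial>Mv v c0 s) = (g (v, c0 + s) + g (v, c0 - s)) / 2" .
qed

lemma Mv_nn_integral:
  fixes g :: "(real^'p) \<times> real \<Rightarrow> real"
  assumes [measurable]: "g \<in> borel_measurable borel" and nn: "\<And>z. 0 \<le> g z"
  shows "(\<integral>\<^sup>+z. ennreal (g z) \<partial>Mv v c0 s) = ennreal ((g (v, c0 + s) + g (v, c0 - s)) / 2)"
proof -
  have gm: "g \<in> borel_measurable (Mv v c0 s)"
    using assms(1) measurable_cong_sets[OF Mv_basic(2) refl] by blast
  have "(\<integral>\<^sup>+z. ennreal (g z) \<partial>Mv v c0 s) = ennreal (\<integral>z. g z \<partial>Mv v c0 s)"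
    by (rule nn_integral_eq_integral[OF Mv_integral(1)[OF assms(1)]]) (simp add: nn)
  then show ?thesis using Mv_integral(2)[OF assms(1)] by simp
qed



lemma subalg_F:
  assumes P: "prob_space M" and sM: "sets M = sets borel"
  shows "finite_measure_subalgebra M (sigma_xS S M)"
proof -
  interpret prob_space M by (rule P)
  have gM: "(\<lambda>z. proj S (fst z)) \<in> borel_measurable M"
    by (rule meas_cont[OF sM]) (intro continuous_intros)
  have subalg: "subalgebra M (sigma_xS S M)"
    unfolding subalgebra_def sigma_xS_def
    using sets_image_in_sets[OF refl gM] by simp
  show ?thesis by unfold_locales (rule subalg)
qed

lemma F_meas:
  assumes "continuous_on UNIV h"
  shows "(\<lambda>z. h (proj S (fst z))) \<in> borel_measurable (sigma_xS S M)"
proof -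
  have gF: "(\<lambda>z. proj S (fst z)) \<in> measurable (sigma_xS S M) borel"
    unfolding sigma_xS_def by (rule measurable_vimage_algebra1) simp
  have "h \<in> borel_measurable borel" using assms by (rule borel_measurable_continuous_onI)
  from measurable_comp[OF gF this] show ?thesis unfolding o_def .
qed

lemma Mv_in_U:
  fixes bstar v :: "real^'p"
  assumes s2: "s2 > 0" and vj: "\<And>j. (v$j)^2 \<le> s2"
  shows "Mv v (proj (supp bstar) bstar \<bullet> proj (supp bstar) v) (sqrt s2) \<in> U_set bstar s2"
proof -
  define S where "S = supp bstar"
  define c0 where "c0 = proj S bstar \<bullet> proj S v"
  define M where "M = Mv v c0 (sqrt s2)"
  define F where "F = sigma_xS S M"
  note PM = Mv_basic[of v c0 "sqrt s2", folded M_def]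
  interpret finite_measure_subalgebra M F unfolding F_def by (rule subalg_F[OF PM])
  have spM: "space M = UNIV" using sets_eq_imp_space_eq[OF PM(2)] by simp
  have sb[measurable]: "snd \<in> borel_measurable borel"
    by (rule borel_measurable_continuous_onI) (intro continuous_intros)
  define g where "g z = proj S bstar \<bullet> proj S (fst z)" for z :: "(real^'p) \<times> real"
  have gb[measurable]: "g \<in> borel_measurable borel" unfolding g_def
    by (rule borel_measurable_continuous_onI) (intro continuous_intros)
  have gF: "g \<in> borel_measurable F" unfolding g_def F_def
    by (rule F_meas) (intro continuous_intros)
  have int_snd: "integrable M snd" unfolding M_def by (rule Mv_integral) simp
  have int_g: "integrable M g" unfolding M_def by (rule Mv_integral) simp
  have ce: "AE z in M. real_cond_exp M F snd z = g z"
  proof (rule real_cond_exp_charact[OF _ int_snd int_g gF])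
    fix A assume A: "A \<in> sets F"
    then obtain B where B: "A = (\<lambda>z. proj S (fst z)) -` B \<inter> space M"
      unfolding F_def sigma_xS_def by (subst (asm) sets_vimage_algebra2) auto
    have AM: "A \<in> sets borel" using A subalg PM(2) unfolding subalgebra_def by auto
    have iA: "indicator A (v, y) = (indicator A (v, c0) :: real)" for y
      unfolding B spM by (simp add: indicator_def)
    have gv: "g (v, y) = c0" for y by (simp add: g_def c0_def)
    show "(\<integral>z\<in>A. snd z \<partial>M) = (\<integral>z\<in>A. g z \<partial>M)"
      unfolding set_lebesgue_integral_def M_def
      apply (subst (1 2) Mv_integral(2))
      apply (intro borel_measurable_scaleR borel_measurable_indicator AM gb)
      apply (intro borel_measurable_scaleR borel_measurable_indicator AM sb)
      by (simp add: iA[of "c0 + sqrt s2"] iA[of "c0 - sqrt s2"] gv algebra_simps)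
  qed
  have hb[measurable]: "(\<lambda>z. ennreal ((snd z - g z)\<^sup>2)) \<in> borel_measurable borel" by measurable
  have hm: "(\<lambda>z. ennreal ((snd z - g z)\<^sup>2)) \<in> borel_measurable M"
    by (subst measurable_cong_sets[OF PM(2) refl]) (rule hb)
  have "AE z in M. ennreal ((snd z - g z)\<^sup>2) = ennreal s2"
    unfolding M_def Mv_def
  proof (subst AE_distr_iff)
    show "(\<lambda>t. (v, c0 + (if t then sqrt s2 else - sqrt s2))) \<in> measurable (measure_pmf (pmf_of_set UNIV)) borel"
      by (simp only: measurable_pmf_measure1) auto
    show "{x \<in> space borel. ennreal ((snd x - g x)\<^sup>2) = ennreal s2} \<in> sets borel" by measurable
    show "AE t in measure_pmf (pmf_of_set UNIV). ennreal ((snd (v, c0 + (if t then sqrt s2 else - sqrt s2)) - g (v, c0 + (if t then sqrt s2 else - sqrt s2)))\<^sup>2) = ennreal s2"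
      using s2 by (simp add: g_def c0_def)
  qed
  then have "AE z in M. nn_cond_exp M F (\<lambda>z. ennreal ((snd z - g z)\<^sup>2)) z = nn_cond_exp M F (\<lambda>_. ennreal s2) z"
    by (intro nn_cond_exp_cong hm) auto
  moreover have "AE z in M. ennreal s2 = nn_cond_exp M F (\<lambda>_. ennreal s2) z"
    by (intro nn_cond_exp_F_meas) simp
  ultimately have nce: "AE z in M. nn_cond_exp M F (\<lambda>z. ennreal ((snd z - g z)\<^sup>2)) z \<le> ennreal s2"
    by eventually_elim simp
  have mom: "(\<integral>\<^sup>+ z. ennreal ((fst z $ j)\<^sup>2) \<partial>M) \<le> ennreal s2" for j
  proof -
    have [measurable]: "(\<lambda>z::(real^'p) \<times> real. (fst z $ j)\<^sup>2) \<in> borel_measurable borel"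
      by (rule borel_measurable_continuous_onI) (intro continuous_intros)
    have "(\<integral>\<^sup>+ z. ennreal ((fst z $ j)\<^sup>2) \<partial>M) = ennreal ((v$j)^2)"
      unfolding M_def by (subst Mv_nn_integral) auto
    then show ?thesis using vj[of j] by (simp add: ennreal_leI)
  qed
  show ?thesis
    unfolding U_set_def
    using PM int_snd ce nce mom
    unfolding M_def F_def S_def g_def c0_def by auto
qed



lemma proj_c_self: "proj (- supp b) b = 0"
  by (auto simp: proj_def supp_def vec_eq_iff)

lemma risk_upper:
  fixes bstar b :: "real^'p"
  assumes "s2 > 0"
  shows "R_oos b (U_set bstar s2) \<le> ennreal (s2 + (s2 * (real CARD('p))\<^sup>2 * (norm (b - bstar))\<^sup>2
                  + 2 * s2 * real CARD('p) * norm (proj (- supp bstar) b)))"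
  unfolding R_oos_def using upper_bound[OF assms] by (intro SUP_least) auto

lemma risk_lower:
  fixes bstar b v :: "real^'p"
  assumes s2: "s2 > 0" and vj: "\<And>j. (v$j)^2 \<le> s2"
  shows "ennreal (s2 + ((bstar - b) \<bullet> v)^2) \<le> R_oos b (U_set bstar s2)"
proof -
  define S where "S = supp bstar"
  define c0 where "c0 = proj S bstar \<bullet> proj S v"
  have c0': "c0 = bstar \<bullet> v"
  proof -
    have "proj S bstar = bstar" unfolding S_def by (rule proj_supp_self)
    moreover have "bstar \<bullet> v = bstar \<bullet> proj S v + proj (- S) bstar \<bullet> v" by (rule inner_split)
    moreover have "proj (- S) bstar \<bullet> v = 0" unfolding inner_proj S_def by (rule bstar_projc)
    ultimately show ?thesis unfolding c0_def by simp
  qed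
  have mem: "Mv v c0 (sqrt s2) \<in> U_set bstar s2"
    unfolding c0_def S_def by (rule Mv_in_U[OF s2 vj])
  have hb: "(\<lambda>z::(real^'p) \<times> real. (snd z - b \<bullet> fst z)\<^sup>2) \<in> borel_measurable borel"
    by (rule borel_measurable_continuous_onI) (intro continuous_intros)
  have "(\<integral>\<^sup>+ z. ennreal ((snd z - b \<bullet> fst z)\<^sup>2) \<partial>Mv v c0 (sqrt s2))
      = ennreal (((c0 + sqrt s2 - b \<bullet> v)\<^sup>2 + (c0 - sqrt s2 - b \<bullet> v)\<^sup>2) / 2)"
    by (subst Mv_nn_integral[OF hb]) auto
  also have "((c0 + sqrt s2 - b \<bullet> v)\<^sup>2 + (c0 - sqrt s2 - b \<bullet> v)\<^sup>2) / 2 = s2 + ((bstar - b) \<bullet> v)^2"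
  proof -
    have gen: "((a + r)^2 + (a - r)^2)/2 = r^2 + a^2" for a r :: real
      by (simp add: power2_eq_square field_simps)
    have e: "c0 + sqrt s2 - b \<bullet> v = (c0 - b \<bullet> v) + sqrt s2" "c0 - sqrt s2 - b \<bullet> v = (c0 - b \<bullet> v) - sqrt s2"
      by simp_all
    show ?thesis unfolding e gen using s2 by (simp add: c0' inner_diff_left)
  qed
  finally have eq: "(\<integral>\<^sup>+ z. ennreal ((snd z - b \<bullet> fst z)\<^sup>2) \<partial>Mv v c0 (sqrt s2)) = ennreal (s2 + ((bstar - b) \<bullet> v)^2)" .
  show ?thesis unfolding R_oos_def using mem eq
    by (metis (no_types, lifting) SUP_upper)
qed

theorem proposition1:
  fixes bstar :: "real^'p" and s2 :: real
  assumes "s2 > 0"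
  shows "R_oos bstar (U_set bstar s2) = ennreal s2 \<and>
    (\<forall>b :: real^'p.
       ennreal (s2 * (norm (b - bstar))\<^sup>2) + R_oos bstar (U_set bstar s2) \<le> R_oos b (U_set bstar s2) \<and>
       R_oos b (U_set bstar s2) \<le> R_oos bstar (U_set bstar s2) +
         ennreal (s2 * (real CARD('p))\<^sup>2 * (norm (b - bstar))\<^sup>2
                  + 2 * s2 * real CARD('p) * norm (proj (- supp bstar) b)))"
proof -
  have s2: "s2 > 0" by (rule assms)
  have R0: "R_oos bstar (U_set bstar s2) = ennreal s2"
  proof (rule antisym)
    show "R_oos bstar (U_set bstar s2) \<le> ennreal s2"
      using risk_upper[OF s2, of bstar bstar] by (simp add: proj_c_self)
    show "ennreal s2 \<le> R_oos bstar (U_set bstar s2)"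
      using risk_lower[OF s2, of 0 bstar bstar] s2 by simp
  qed
  have "ennreal (s2 * (norm (b - bstar))\<^sup>2) + R_oos bstar (U_set bstar s2) \<le> R_oos b (U_set bstar s2) \<and>
       R_oos b (U_set bstar s2) \<le> R_oos bstar (U_set bstar s2) +
         ennreal (s2 * (real CARD('p))\<^sup>2 * (norm (b - bstar))\<^sup>2
                  + 2 * s2 * real CARD('p) * norm (proj (- supp bstar) b))" for b :: "real^'p"
  proof
    define d where "d = bstar - b"
    have nd: "norm (b - bstar) = norm d" unfolding d_def by (rule norm_minus_commute)
    define v where "v = (sqrt s2 / norm d) *\<^sub>R d"
    have vj: "(v$j)^2 \<le> s2" for j
    proof (cases "d = 0")
      case True then show ?thesis using s2 by (simp add: v_def)
    next
      case False
      then have n0: "norm d > 0" by simp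
      have "\<bar>d$j\<bar> \<le> norm d" by (rule component_le_norm_cart)
      then have "(d$j)^2 \<le> (norm d)^2" by (metis abs_ge_zero power2_abs power_mono)
      then have "(d$j)^2 / (norm d)^2 \<le> 1" using n0 by simp
      then have "s2 * ((d$j)^2 / (norm d)^2) \<le> s2" using s2 by (intro mult_left_le) auto
      then show ?thesis using s2 n0 by (simp add: v_def power_divide power_mult_distrib)
    qed
    have dv: "(d \<bullet> v)^2 = s2 * (norm d)^2"
    proof (cases "d = 0")
      case True then show ?thesis by (simp add: v_def)
    next
      case False
      then have n0: "norm d > 0" by simp
      have "d \<bullet> v = sqrt s2 / norm d * (norm d)^2" by (simp add: v_def power2_norm_eq_inner)
      also have "\<dots> = sqrt s2 * norm d" using n0 by (simp add: power2_eq_square)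
      finally show ?thesis using s2 by (simp add: power_mult_distrib)
    qed
    have "ennreal (s2 * (norm (b - bstar))\<^sup>2) + R_oos bstar (U_set bstar s2) = ennreal (s2 + (d \<bullet> v)^2)"
      unfolding R0 dv nd using s2 by (subst ennreal_plus[symmetric]) (simp_all add: add.commute)
    also have "\<dots> \<le> R_oos b (U_set bstar s2)"
      unfolding d_def by (rule risk_lower[OF s2 vj])
    finally show "ennreal (s2 * (norm (b - bstar))\<^sup>2) + R_oos bstar (U_set bstar s2) \<le> R_oos b (U_set bstar s2)" .
  next
    have "R_oos b (U_set bstar s2) \<le> ennreal (s2 + (s2 * (real CARD('p))\<^sup>2 * (norm (b - bstar))\<^sup>2
                  + 2 * s2 * real CARD('p) * norm (proj (- supp bstar) b)))"
      by (rule risk_upper[OF s2])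
    also have "\<dots> = R_oos bstar (U_set bstar s2) +
         ennreal (s2 * (real CARD('p))\<^sup>2 * (norm (b - bstar))\<^sup>2
                  + 2 * s2 * real CARD('p) * norm (proj (- supp bstar) b))"
      unfolding R0 using s2 by (subst ennreal_plus) auto
    finally show "R_oos b (U_set bstar s2) \<le> R_oos bstar (U_set bstar s2) +
         ennreal (s2 * (real CARD('p))\<^sup>2 * (norm (b - bstar))\<^sup>2
                  + 2 * s2 * real CARD('p) * norm (proj (- supp bstar) b))" .
  qed
  with R0 show ?thesis by blast
qed


end
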